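(* Let $\mathcal G$ be a network, $h\in\mathbb R^{\mathcal V}$ and $a\in\{\pm1\}$. The coordination game on $\mathcal G$ with external field $h$ has $a\mathbf 1$ as its unique equilibrium if and only if both: (a) $w\ngeq a h$; and (b) every nonempty subset $\mathcal R\subseteq\mathcal V\setminus\mathcal S_a(h)$ contains some node $i$ with $w_i^{\mathcal R}<w_i^{\mathcal V\setminus\mathcal R}+a h_i$.
   Context: A network is $\mathcal G=(\mathcal V,\mathcal E,W)$ with finite node set $\mathcal V$, links $\mathcal E\subseteq\mathcal V\times\mathcal V$, weight matrix $W\in\mathbb R_+^{\mathcal V\times\mathcal V}$ with zero diagonal, $W_{ij}>0$ iff $(i,j)\in\mathcal E$; for $\mathcal S\subseteq\mathcal V$, $w_i^{\mathcal S}=\sum_{j\in\mathcal S}W_{ij}$; $w=W\mathbf 1$. $\mathcal X=\{-1,+1\}^{\mathcal V}$. $x\ngeq y$ means $x_i<y_i$ for some $i$. $\mathcal S_a(h)=\{i\in\mathcal V: a h_i>w_i\}$. Coordination game on $\mathcal G$ with external field $h$: players $\mathcal V$, actions $\{\pm1\}$, utilities $u_i(x)=x_i(\sum_jW_{ij}x_j+h_i)$; $x^*$ is an equilibrium if for every $i$, $x_i^*$ maximizes $u_i(\cdot,x^*_{-i})$ over $\{\pm1\}$. *)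

theory Defs
  imports Complex_Main
begin

definition network :: "('v::finite \<Rightarrow> 'v \<Rightarrow> real) \<Rightarrow> bool" where
  "network W \<longleftrightarrow> (\<forall>i j. 0 \<le> W i j) \<and> (\<forall>i. W i i = 0)"

definition links :: "('v \<Rightarrow> 'v \<Rightarrow> real) \<Rightarrow> ('v \<times> 'v) set" where
  "links W = {(i,j). W i j > 0}"

definition wS :: "('v::finite \<Rightarrow> 'v \<Rightarrow> real) \<Rightarrow> 'v set \<Rightarrow> 'v \<Rightarrow> real" where
  "wS W S i = (\<Sum>j\<in>S. W i j)"

definition wdeg :: "('v::finite \<Rightarrow> 'v \<Rightarrow> real) \<Rightarrow> 'v \<Rightarrow> real" where
  "wdeg W i = (\<Sum>j\<in>UNIV. W i j)"

definition Sa :: "('v::finite \<Rightarrow> 'v \<Rightarrow> real) \<Rightarrow> real \<Rightarrow> ('v \<Rightarrow> real) \<Rightarrow> 'v set" where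
  "Sa W a h = {i. a * h i > wdeg W i}"

definition config :: "('v \<Rightarrow> real) \<Rightarrow> bool" where
  "config x \<longleftrightarrow> (\<forall>i. x i = -1 \<or> x i = 1)"

definition utility :: "('v::finite \<Rightarrow> 'v \<Rightarrow> real) \<Rightarrow> ('v \<Rightarrow> real) \<Rightarrow> ('v \<Rightarrow> real) \<Rightarrow> 'v \<Rightarrow> real" where
  "utility W h x i = x i * ((\<Sum>j\<in>UNIV. W i j * x j) + h i)"

definition equilibrium :: "('v::finite \<Rightarrow> 'v \<Rightarrow> real) \<Rightarrow> ('v \<Rightarrow> real) \<Rightarrow> ('v \<Rightarrow> real) \<Rightarrow> bool" where
  "equilibrium W h x \<longleftrightarrow> config x \<and>
     (\<forall>i. \<forall>s\<in>{-1, 1}. utility W h (x(i := s)) i \<le> utility W h x i)"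

definition unique_equilibrium :: "('v::finite \<Rightarrow> 'v \<Rightarrow> real) \<Rightarrow> ('v \<Rightarrow> real) \<Rightarrow> ('v \<Rightarrow> real) \<Rightarrow> bool" where
  "unique_equilibrium W h x \<longleftrightarrow> equilibrium W h x \<and> (\<forall>y. equilibrium W h y \<longrightarrow> y = x)"

end

theory Submission
  imports Defs
begin

lemma sum_upd:
  assumes "network W"
  shows "(\<Sum>j\<in>UNIV. W i j * (y(i:=s)) j) = (\<Sum>j\<in>UNIV. W i j * y j)"
  by (rule sum.cong) (use assms in \<open>auto simp: network_def\<close>)

lemma eq_iff:
  assumes "network W"
  shows "equilibrium W h y \<longleftrightarrow> config y \<and> (\<forall>i. 0 \<le> y i * ((\<Sum>j\<in>UNIV. W i j * y j) + h i))"
proof -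
  have u: "utility W h (y(i:=s)) i = s * ((\<Sum>j\<in>UNIV. W i j * y j) + h i)" for i s
    using sum_upd[OF assms] by (simp add: utility_def)
  show ?thesis
  proof
    assume e: "equilibrium W h y"
    hence c: "config y" by (simp add: equilibrium_def)
    have "0 \<le> y i * ((\<Sum>j\<in>UNIV. W i j * y j) + h i)" for i
    proof -
      have "utility W h (y(i:=-1)) i \<le> utility W h y i" "utility W h (y(i:=1)) i \<le> utility W h y i"
        using e by (auto simp: equilibrium_def)
      moreover have "utility W h y i = y i * ((\<Sum>j\<in>UNIV. W i j * y j) + h i)" by (simp add: utility_def)
      ultimately show ?thesis using u[of i "-1"] u[of i 1] by simp
    qed
    thus "config y \<and> (\<forall>i. 0 \<le> y i * ((\<Sum>j\<in>UNIV. W i j * y j) + h i))" using c by blast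
  next
    assume a: "config y \<and> (\<forall>i. 0 \<le> y i * ((\<Sum>j\<in>UNIV. W i j * y j) + h i))"
    show "equilibrium W h y"
      unfolding equilibrium_def
    proof (intro conjI allI ballI)
      show "config y" using a by blast
      fix i and s :: real assume s: "s \<in> {-1,1}"
      have "y i = -1 \<or> y i = 1" using a by (simp add: config_def)
      thus "utility W h (y(i:=s)) i \<le> utility W h y i"
        using u[of i s] a[THEN conjunct2, rule_format, of i] s by (auto simp: utility_def)
    qed
  qed
qed

definition yR :: "'v set \<Rightarrow> real \<Rightarrow> 'v \<Rightarrow> real" where
  "yR R a = (\<lambda>i. if i \<in> R then -a else a)"

lemma sum_yR:
  fixes W :: "'v::finite \<Rightarrow> 'v \<Rightarrow> real"
  shows "(\<Sum>j\<in>UNIV. W i j * yR R a j) = a * (wS W (UNIV - R) i - wS W R i)"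
proof -
  have "(\<Sum>j\<in>UNIV. W i j * yR R a j) = (\<Sum>j\<in>UNIV \<inter> R. W i j * yR R a j) + (\<Sum>j\<in>UNIV - R. W i j * yR R a j)"
    by (rule sum.Int_Diff) simp
  also have "(\<Sum>j\<in>UNIV \<inter> R. W i j * yR R a j) = (\<Sum>j\<in>R. - a * W i j)"
    by (rule sum.cong) (auto simp: yR_def)
  also have "(\<Sum>j\<in>UNIV - R. W i j * yR R a j) = (\<Sum>j\<in>UNIV - R. a * W i j)"
    by (rule sum.cong) (auto simp: yR_def)
  finally show ?thesis by (simp add: wS_def sum_distrib_left algebra_simps sum_negf)
qed

lemma wS_split:
  fixes W :: "'v::finite \<Rightarrow> 'v \<Rightarrow> real"
  shows "wS W R i + wS W (UNIV - R) i = wdeg W i"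
  unfolding wS_def wdeg_def
  by (metis Int_UNIV_left finite sum.Int_Diff)

lemma wS_nonneg: "network W \<Longrightarrow> 0 \<le> wS W R i"
  unfolding wS_def network_def by (simp add: sum_nonneg)

definition closedR :: "('v::finite \<Rightarrow> 'v \<Rightarrow> real) \<Rightarrow> ('v \<Rightarrow> real) \<Rightarrow> real \<Rightarrow> 'v set \<Rightarrow> bool" where
  "closedR W h a R \<longleftrightarrow> (\<forall>i\<in>R. wS W (UNIV - R) i + a * h i \<le> wS W R i)"

lemma eqR:
  assumes "network W" "a = -1 \<or> a = 1"
  shows "equilibrium W h (yR R a) \<longleftrightarrow> closedR W h a R \<and> (\<forall>i. i \<notin> R \<longrightarrow> wS W R i \<le> wS W (UNIV - R) i + a * h i)"
proof -
  have c: "config (yR R a)" using assms(2) by (auto simp: config_def yR_def)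
  have aa: "a * a = 1" using assms(2) by auto
  have k: "yR R a i * ((\<Sum>j\<in>UNIV. W i j * yR R a j) + h i) =
     (if i \<in> R then wS W R i - wS W (UNIV - R) i - a * h i else wS W (UNIV - R) i - wS W R i + a * h i)" for i
    using assms(2) unfolding sum_yR by (elim disjE) (auto simp: yR_def algebra_simps)
  show ?thesis unfolding eq_iff[OF assms(1)] closedR_def using c k
    by (smt (verit))
qed

lemma closed_mono:
  assumes "network W" "closedR W h a R" "R \<subseteq> R'" "i \<in> R"
  shows "wS W (UNIV - R') i + a * h i \<le> wS W R' i"
proof -
  have "wS W R i \<le> wS W R' i" unfolding wS_def
    using assms(1,3) by (intro sum_mono2) (auto simp: network_def)
  moreover have "wS W (UNIV - R') i \<le> wS W (UNIV - R) i" unfolding wS_def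
    using assms(1,3) by (intro sum_mono2) (auto simp: network_def)
  ultimately show ?thesis using assms(2,4) unfolding closedR_def by fastforce
qed

lemma closed_insert:
  assumes "network W" "closedR W h a R" "j \<notin> R" "wS W (UNIV - R) j + a * h j < wS W R j"
  shows "closedR W h a (insert j R)"
  unfolding closedR_def
proof
  fix i assume i: "i \<in> insert j R"
  show "wS W (UNIV - insert j R) i + a * h i \<le> wS W (insert j R) i"
  proof (cases "i = j")
    case True
    have wjj: "W j j = 0" using assms(1) by (simp add: network_def)
    have "wS W (insert j R) j = wS W R j" unfolding wS_def using assms(3) wjj by simp
    moreover have "UNIV - R = insert j (UNIV - insert j R)" using assms(3) by auto
    hence "wS W (UNIV - R) j = wS W (UNIV - insert j R) j" unfolding wS_def using wjj
      by (metis Diff_iff add_0 finite insertI1 sum.insert)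
    ultimately show ?thesis using True assms(4) by simp
  next
    case False
    thus ?thesis using closed_mono[OF assms(1,2), of "insert j R" i] i by auto
  qed
qed

theorem proposition5:
  fixes W :: "'v::finite \<Rightarrow> 'v \<Rightarrow> real" and h :: "'v \<Rightarrow> real" and a :: real
  assumes "network W"
    and "a = -1 \<or> a = 1"
  shows "unique_equilibrium W h (\<lambda>_. a) \<longleftrightarrow>
           ((\<exists>i. wdeg W i < a * h i) \<and>
            (\<forall>R. R \<noteq> {} \<and> R \<subseteq> UNIV - Sa W a h \<longrightarrow>
                 (\<exists>i\<in>R. wS W R i < wS W (UNIV - R) i + a * h i)))"
proof
  assume u: "unique_equilibrium W h (\<lambda>_. a)"
  have a0: "a \<noteq> 0" using assms(2) by auto
  have yU: "yR (UNIV::'v set) a = (\<lambda>_. -a)" by (simp add: yR_def)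
  have "(\<lambda>_. -a) \<noteq> (\<lambda>_::'v. a)"
  proof
    assume "(\<lambda>_. -a) = (\<lambda>_::'v. a)"
    hence "-a = a" by (rule fun_cong)
    thus False using a0 by simp
  qed
  hence "\<not> equilibrium W h (yR UNIV a)" using u yU unfolding unique_equilibrium_def by auto
  then obtain i where "\<not> wS W (UNIV - UNIV) i + a * h i \<le> wS W UNIV i"
    unfolding eqR[OF assms] closedR_def by auto
  hence A: "\<exists>i. wdeg W i < a * h i" by (auto simp: wS_def wdeg_def not_le)
  have B: "\<exists>i\<in>R. wS W R i < wS W (UNIV - R) i + a * h i" if R: "R \<noteq> {}" for R
  proof (rule ccontr)
    assume "\<not> ?thesis"
    hence cR: "closedR W h a R" by (auto simp: closedR_def not_less)
    define C where "C = {S. closedR W h a S \<and> R \<subseteq> S}"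
    have fC: "finite (card ` C)" by simp
    have "card R \<in> card ` C" using cR by (auto simp: C_def)
    define m where "m = Max (card ` C)"
    have "m \<in> card ` C" unfolding m_def using fC \<open>card R \<in> card ` C\<close> by (intro Max_in) auto
    then obtain S where S: "S \<in> C" "card S = m" by auto
    have cS: "closedR W h a S" "R \<subseteq> S" using S by (auto simp: C_def)
    have out: "wS W S j \<le> wS W (UNIV - S) j + a * h j" if j: "j \<notin> S" for j
    proof (rule ccontr)
      assume "\<not> ?thesis"
      hence "closedR W h a (insert j S)" using closed_insert[OF assms(1) cS(1) j] by simp
      hence "insert j S \<in> C" using cS by (auto simp: C_def)
      hence "card (insert j S) \<le> m" unfolding m_def using fC by simp
      thus False using S j by simp
    qed
    have "equilibrium W h (yR S a)" using eqR[OF assms] cS out by auto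
    hence "yR S a = (\<lambda>_. a)" using u unfolding unique_equilibrium_def by blast
    moreover obtain r where "r \<in> S" using R cS by auto
    ultimately have "-a = a" unfolding yR_def by (metis (mono_tags))
    thus False using a0 by simp
  qed
  show "(\<exists>i. wdeg W i < a * h i) \<and> (\<forall>R. R \<noteq> {} \<and> R \<subseteq> UNIV - Sa W a h \<longrightarrow>
                 (\<exists>i\<in>R. wS W R i < wS W (UNIV - R) i + a * h i))" using A B by blast
next
  assume H: "(\<exists>i. wdeg W i < a * h i) \<and> (\<forall>R. R \<noteq> {} \<and> R \<subseteq> UNIV - Sa W a h \<longrightarrow>
                 (\<exists>i\<in>R. wS W R i < wS W (UNIV - R) i + a * h i))"
  have y0: "yR ({}::'v set) a = (\<lambda>_. a)" by (simp add: yR_def)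
  have wn: "0 \<le> wdeg W i" for i using wS_split[of W "{}" i] wS_nonneg[OF assms(1), of "{}" i]
      wS_nonneg[OF assms(1), of "UNIV" i] by simp
  have E: "equilibrium W h (\<lambda>_. a)"
  proof -
    have "wS W {} j \<le> wS W (UNIV - {}) j + a * h j" for j
    proof (rule ccontr)
      assume n: "\<not> ?thesis"
      have w0: "wS W {i} i = 0" for i using assms(1) by (simp add: wS_def network_def)
      have sp: "wS W {j} j + wS W (UNIV - {j}) j = wdeg W j" by (rule wS_split)
      have "wdeg W j + a * h j < 0" using n by (simp add: wS_def wdeg_def)
      hence "j \<notin> Sa W a h" using wn[of j] by (simp add: Sa_def)
      then obtain i where "i \<in> {j}" "wS W {j} i < wS W (UNIV - {j}) i + a * h i" using H by blast
      hence "0 < wdeg W j + a * h j" using w0 sp by simp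
      thus False using \<open>wdeg W j + a * h j < 0\<close> by simp
    qed
    hence "equilibrium W h (yR {} a)" using eqR[OF assms, of h "{}"] by (simp add: closedR_def)
    thus ?thesis using y0 by simp
  qed
  have U: "y = (\<lambda>_. a)" if ey: "equilibrium W h y" for y
  proof -
    define R where "R = {i. y i = -a}"
    have "y = yR R a" using ey assms(2) unfolding equilibrium_def config_def R_def yR_def
      by (auto intro!: ext)
    hence eR: "equilibrium W h (yR R a)" using ey by simp
    hence cR: "closedR W h a R" using eqR[OF assms] by blast
    show ?thesis
    proof (cases "R = {}")
      case True thus ?thesis using \<open>y = yR R a\<close> y0 by simp
    next
      case False
      have "R \<subseteq> UNIV - Sa W a h"
      proof
        fix i assume i: "i \<in> R"
        have "wS W (UNIV - R) i + a * h i \<le> wS W R i" using cR i by (simp add: closedR_def)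
        moreover have "wS W R i + wS W (UNIV - R) i = wdeg W i" by (rule wS_split)
        moreover have "0 \<le> wS W (UNIV - R) i" by (rule wS_nonneg[OF assms(1)])
        ultimately have "a * h i \<le> wdeg W i" by linarith
        thus "i \<in> UNIV - Sa W a h" by (simp add: Sa_def)
      qed
      hence "\<exists>i\<in>R. wS W R i < wS W (UNIV - R) i + a * h i" using H[THEN conjunct2, rule_format, of R] False by simp
      then obtain i where "i \<in> R" "wS W R i < wS W (UNIV - R) i + a * h i" by blast
      hence "False" using cR unfolding closedR_def by fastforce
      thus ?thesis ..
    qed
  qed
  show "unique_equilibrium W h (\<lambda>_. a)" unfolding unique_equilibrium_def using E U by blast
qed

end
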